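(* If $\Gamma\vdash^k t:\sigma$ is derivable in $\cap J$, then $t\in SN_{d\beta}$ and $\|t\|_{d\beta}\le k$, where $\|t\|_{d\beta}$ is the maximal length of a $\to_{d\beta}$-reduction sequence starting at $t$.
   Context: Terms $\mathtt T_J$: $t,u,r ::= x \mid \lambda x.t \mid t(u,y.r)$ ($y$ bound in $r$), up to $\alpha$-equivalence; $\{u/x\}t$ capture-avoiding substitution. List contexts $\mathtt D ::= \Diamond \mid t(u,y.\mathtt D)$. Distant beta: $\mathtt D\langle\lambda x.t\rangle(u,y.r) \mapsto_{d\beta} \{\{u/x\}\mathtt D\langle t\rangle/y\}r$ (variables bound by $\mathtt D$ not free in $u$, $x$ not in $\mathtt D$), $\to_{d\beta}$ its closure under all contexts; $SN_{d\beta}$ the set of terms with no infinite $\to_{d\beta}$-sequence. System $\cap J$: types $\sigma,\tau ::= \alpha \mid \mathcal M\to\sigma$, $\mathcal M=[\sigma_i]_{i\in I}$ a finite possibly empty multiset; $\sqcup$ multiset union; environments map variables to multisets, $\wedge$ pointwise union, $\Gamma;x:\mathcal M$ extension with $x\notin\mathrm{dom}\,\Gamma$. $\mathrm{ch}(\mathcal M)=\mathcal M$ if $\mathcal M\ne[\,]$, $\mathrm{ch}([\,])=[\tau]$ for an arbitrary $\tau$. Rules: (var) $x:[\sigma]\vdash x:\sigma$; (abs) from $\Gamma;x:\mathcal M\vdash t:\sigma$ infer $\Gamma\vdash\lambda x.t:\mathcal M\to\sigma$; (many) from $(\Gamma_i\vdash t:\sigma_i)_{i\in I}$, $I\ne\emptyset$,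 infer $\wedge_i\Gamma_i\vdash t:[\sigma_i]_{i\in I}$; (app) from $\Gamma\vdash t:\mathrm{ch}([\mathcal M_i\to\tau_i]_{i\in I})$, $\Delta\vdash u:\mathrm{ch}(\sqcup_i\mathcal M_i)$, $\Lambda;y:[\tau_i]_{i\in I}\vdash r:\sigma$ infer $\Gamma\wedge\Delta\wedge\Lambda\vdash t(u,y.r):\sigma$. $\vdash^k$ indicates a derivation of size $k$ = number of rule instances other than (many). *)

theory Defs
  imports "HOL-Library.Multiset" "HOL-Library.Extended_Nat"
begin

text \<open>Terms of Lambda-J in de Bruijn representation (terms up to alpha-equivalence).
  App t u r is t(u, y.r), where y is bound (index 0) in r.\<close>
datatype trm = Var nat | Lam trm | App trm trm trm

fun lift :: "nat \<Rightarrow> trm \<Rightarrow> trm" where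
  "lift k (Var i) = (if i < k then Var i else Var (Suc i))"
| "lift k (Lam t) = Lam (lift (Suc k) t)"
| "lift k (App t u r) = App (lift k t) (lift k u) (lift (Suc k) r)"

text \<open>subst t k s: capture-avoiding substitution of s for index k in t
  (indices above k are decremented, since the binder of k disappears).\<close>
fun subst :: "trm \<Rightarrow> nat \<Rightarrow> trm \<Rightarrow> trm" where
  "subst (Var i) k s = (if i < k then Var i else if i = k then s else Var (i - 1))"
| "subst (Lam t) k s = Lam (subst t (Suc k) (lift 0 s))"
| "subst (App t u r) k s = App (subst t k s) (subst u k s) (subst r (Suc k) (lift 0 s))"

datatype ctx = Hole | CApp trm trm ctx

fun plug :: "ctx \<Rightarrow> trm \<Rightarrow> trm" where
  "plug Hole s = s"
| "plug (CApp t u D) s = App t u (plug D s)"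

fun depth :: "ctx \<Rightarrow> nat" where
  "depth Hole = 0"
| "depth (CApp t u D) = Suc (depth D)"

text \<open>Distant beta: D<\<lambda>x.t>(u,y.r) \<mapsto> {{u/x}D<t>/y}r, closed under all contexts.
  The side conditions on variable names are automatic with de Bruijn indices:
  u is lifted over the binders of D.\<close>
inductive dbeta :: "trm \<Rightarrow> trm \<Rightarrow> bool" where
  root: "dbeta (App (plug D (Lam t)) u r)
               (subst r 0 (plug D (subst t 0 ((lift 0 ^^ depth D) u))))"
| lam: "dbeta t t' \<Longrightarrow> dbeta (Lam t) (Lam t')"
| app1: "dbeta t t' \<Longrightarrow> dbeta (App t u r) (App t' u r)"
| app2: "dbeta u u' \<Longrightarrow> dbeta (App t u r) (App t u' r)"
| app3: "dbeta r r' \<Longrightarrow> dbeta (App t u r) (App t u r')"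

definition SN_dbeta :: "trm set" where
  "SN_dbeta = {t. \<not> (\<exists>f. f 0 = t \<and> (\<forall>i. dbeta (f i) (f (Suc i))))}"

definition dnorm :: "trm \<Rightarrow> enat" where
  "dnorm t = Sup {enat n | n. \<exists>t'. (dbeta ^^ n) t t'}"

datatype ty = TVar nat | Arr "ty multiset" ty

type_synonym env = "nat \<Rightarrow> ty multiset"

definition env_union :: "env \<Rightarrow> env \<Rightarrow> env" (infixl "\<and>\<^sub>e" 70) where
  "\<Gamma> \<and>\<^sub>e \<Delta> = (\<lambda>x. \<Gamma> x + \<Delta> x)"

definition env_ext :: "ty multiset \<Rightarrow> env \<Rightarrow> env" where
  "env_ext M \<Gamma> = (\<lambda>x. case x of 0 \<Rightarrow> M | Suc y \<Rightarrow> \<Gamma> y)"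

definition single_env :: "nat \<Rightarrow> ty \<Rightarrow> env" where
  "single_env x \<sigma> = (\<lambda>y. if y = x then {#\<sigma>#} else {#})"

definition ch :: "ty multiset \<Rightarrow> ty \<Rightarrow> ty multiset" where
  "ch M \<tau> = (if M = {#} then {#\<tau>#} else M)"

text \<open>System cap-J with derivation size k (rule instances other than (many)).
  typing G t s k :  G |-^k t : s ;   mtyping G t M k : G |-^k t : M (rule many).\<close>
inductive typing :: "env \<Rightarrow> trm \<Rightarrow> ty \<Rightarrow> nat \<Rightarrow> bool"
  and mtyping :: "env \<Rightarrow> trm \<Rightarrow> ty multiset \<Rightarrow> nat \<Rightarrow> bool" where
  var: "typing (single_env x \<sigma>) (Var x) \<sigma> 1"
| abs: "typing (env_ext M \<Gamma>) t \<sigma> k \<Longrightarrow> typing \<Gamma> (Lam t) (Arr M \<sigma>) (Suc k)"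
| many_one: "typing \<Gamma> t \<sigma> k \<Longrightarrow> mtyping \<Gamma> t {#\<sigma>#} k"
| many_add: "typing \<Gamma> t \<sigma> k \<Longrightarrow> mtyping \<Delta> t M m \<Longrightarrow> mtyping (\<Gamma> \<and>\<^sub>e \<Delta>) t (add_mset \<sigma> M) (k + m)"
| app: "mtyping \<Gamma> t (ch (image_mset (\<lambda>(M, \<tau>). Arr M \<tau>) A) \<tau>0) k1 \<Longrightarrow>
        mtyping \<Delta> u (ch (sum_mset (image_mset fst A)) \<tau>1) k2 \<Longrightarrow>
        typing (env_ext (image_mset snd A) \<Lambda>) r \<sigma> k3 \<Longrightarrow>
        typing (\<Gamma> \<and>\<^sub>e \<Delta> \<and>\<^sub>e \<Lambda>) (App t u r) \<sigma> (Suc (k1 + k2 + k3))"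

end

theory Submission
  imports Defs
begin


definition env_le :: "env \<Rightarrow> env \<Rightarrow> bool" where
  "env_le G H = (\<forall>x. G x \<subseteq># H x)"

definition drop_env :: "nat \<Rightarrow> env \<Rightarrow> env" where
  "drop_env k G = (\<lambda>i. if i < k then G i else G (Suc i))"

definition shift_env :: "nat \<Rightarrow> env \<Rightarrow> env" where
  "shift_env k G = (\<lambda>i. if i < k then G i else if i = k then {#} else G (i - 1))"

definition empty_env :: env where "empty_env = (\<lambda>_. {#})"

lemma env_le_refl[simp]: "env_le G G" by (simp add: env_le_def)
lemma env_le_trans: "env_le G H \<Longrightarrow> env_le H K \<Longrightarrow> env_le G K"
  unfolding env_le_def by (meson subset_mset.order_trans)
lemma env_le_union: "env_le G G' \<Longrightarrow> env_le H H' \<Longrightarrow> env_le (G \<and>\<^sub>e H) (G' \<and>\<^sub>e H')"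
  unfolding env_le_def env_union_def by (simp add: subset_mset.add_mono)
lemma env_union_assoc: "(G \<and>\<^sub>e H) \<and>\<^sub>e K = G \<and>\<^sub>e (H \<and>\<^sub>e K)"
  unfolding env_union_def by (simp add: add.assoc)
lemma env_union_comm: "G \<and>\<^sub>e H = H \<and>\<^sub>e G"
  unfolding env_union_def by (simp add: add.commute)
lemma env_union_lcomm: "G \<and>\<^sub>e (H \<and>\<^sub>e K) = H \<and>\<^sub>e (G \<and>\<^sub>e K)"
  unfolding env_union_def by (simp add: add.left_commute)
lemma env_union_empty[simp]: "G \<and>\<^sub>e empty_env = G" "empty_env \<and>\<^sub>e G = G"
  unfolding env_union_def empty_env_def by auto
lemma env_le_unionI1: "env_le G (G \<and>\<^sub>e H)"
  unfolding env_le_def env_union_def by simp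
lemma env_le_unionI2: "env_le H (G \<and>\<^sub>e H)"
  unfolding env_le_def env_union_def by simp
lemma env_le_ext: "env_le G H \<Longrightarrow> env_le (env_ext M G) (env_ext M H)"
  unfolding env_le_def env_ext_def by (simp split: nat.split)

lemma shift_union: "shift_env k (G \<and>\<^sub>e H) = shift_env k G \<and>\<^sub>e shift_env k H"
  unfolding shift_env_def env_union_def by auto
lemma drop_union: "drop_env k (G \<and>\<^sub>e H) = drop_env k G \<and>\<^sub>e drop_env k H"
  unfolding drop_env_def env_union_def by auto
lemma shift_le: "env_le G H \<Longrightarrow> env_le (shift_env k G) (shift_env k H)"
  unfolding shift_env_def env_le_def by auto
lemma drop_le: "env_le G H \<Longrightarrow> env_le (drop_env k G) (drop_env k H)"
  unfolding drop_env_def env_le_def by auto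
lemma shift_ext: "shift_env (Suc k) (env_ext M G) = env_ext M (shift_env k G)"
  unfolding shift_env_def env_ext_def by (auto simp: fun_eq_iff split: nat.split)
lemma drop_ext: "drop_env (Suc k) (env_ext M G) = env_ext M (drop_env k G)"
  unfolding drop_env_def env_ext_def by (auto simp: fun_eq_iff split: nat.split)
lemma drop0_ext[simp]: "drop_env 0 (env_ext M G) = G"
  unfolding drop_env_def env_ext_def by (auto simp: fun_eq_iff)
lemma ext_union_shift0: "env_ext M G \<and>\<^sub>e shift_env 0 H = env_ext M (G \<and>\<^sub>e H)"
  unfolding shift_env_def env_ext_def env_union_def by (auto simp: fun_eq_iff split: nat.split)
lemma ext_at0[simp]: "env_ext M G 0 = M" unfolding env_ext_def by simp
lemma ext_atSuc[simp]: "env_ext M G (Suc i) = G i" unfolding env_ext_def by simp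
lemma union_at[simp]: "(G \<and>\<^sub>e H) x = G x + H x" unfolding env_union_def by simp

inductive wt :: "env \<Rightarrow> trm \<Rightarrow> ty \<Rightarrow> nat \<Rightarrow> bool"
  and wmt :: "env \<Rightarrow> trm \<Rightarrow> ty multiset \<Rightarrow> nat \<Rightarrow> bool" where
  wvar: "env_le (single_env x \<sigma>) \<Gamma> \<Longrightarrow> wt \<Gamma> (Var x) \<sigma> 1"
| wabs: "wt (env_ext M \<Gamma>) t \<sigma> k \<Longrightarrow> wt \<Gamma> (Lam t) (Arr M \<sigma>) (Suc k)"
| wone: "wt \<Gamma> t \<sigma> k \<Longrightarrow> wmt \<Gamma> t {#\<sigma>#} k"
| wadd: "wt \<Gamma> t \<sigma> k \<Longrightarrow> wmt \<Delta> t M m \<Longrightarrow> env_le (\<Gamma> \<and>\<^sub>e \<Delta>) \<Theta> \<Longrightarrow> wmt \<Theta> t (add_mset \<sigma> M) (k + m)"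
| wapp: "wmt \<Gamma> t (ch (image_mset (\<lambda>(M, \<tau>). Arr M \<tau>) A) \<tau>0) k1 \<Longrightarrow>
        wmt \<Delta> u (ch (sum_mset (image_mset fst A)) \<tau>1) k2 \<Longrightarrow>
        wt (env_ext (image_mset snd A) \<Lambda>) r \<sigma> k3 \<Longrightarrow>
        env_le (\<Gamma> \<and>\<^sub>e \<Delta> \<and>\<^sub>e \<Lambda>) \<Theta> \<Longrightarrow>
        wt \<Theta> (App t u r) \<sigma> (Suc (k1 + k2 + k3))"

lemma wvar': "env_le (single_env x \<sigma>) \<Gamma> \<Longrightarrow> n = 1 \<Longrightarrow> wt \<Gamma> (Var x) \<sigma> n"
  using wvar by simp

lemma typing_wt:
  "(typing G t s k \<longrightarrow> wt G t s k) \<and> (mtyping G t M k \<longrightarrow> wmt G t M k)"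
proof (induction rule: typing_mtyping.induct)
  case (var x \<sigma>) then show ?case using wvar[of x \<sigma> "single_env x \<sigma>"] by simp
next
  case (abs M \<Gamma> t \<sigma> k) then show ?case by (simp add: wabs)
next
  case (many_one \<Gamma> t \<sigma> k) then show ?case by (simp add: wone)
next
  case (many_add \<Gamma> t \<sigma> k \<Delta> M m) then show ?case by (metis wadd env_le_refl)
next
  case (app \<Gamma> t A \<tau>0 k1 \<Delta> u \<tau>1 k2 \<Lambda> r \<sigma> k3) then show ?case by (metis wapp env_le_refl)
qed

lemma weaken:
  "(wt G t s k \<longrightarrow> (\<forall>G'. env_le G G' \<longrightarrow> wt G' t s k)) \<and>
   (wmt G t M k \<longrightarrow> (\<forall>G'. env_le G G' \<longrightarrow> wmt G' t M k))"
proof (induction rule: wt_wmt.induct)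
  case (wvar x \<sigma> \<Gamma>) then show ?case by (meson env_le_trans wt_wmt.wvar)
next
  case (wabs M \<Gamma> t \<sigma> k) then show ?case by (meson env_le_ext wt_wmt.wabs)
next
  case (wone \<Gamma> t \<sigma> k) then show ?case by (simp add: wt_wmt.wone)
next
  case (wadd \<Gamma> t \<sigma> k \<Delta> M m \<Theta>) then show ?case by (meson env_le_trans wt_wmt.wadd)
next
  case (wapp \<Gamma> t A \<tau>0 k1 \<Delta> u \<tau>1 k2 \<Lambda> r \<sigma> k3 \<Theta>) then show ?case by (meson env_le_trans wt_wmt.wapp)
qed

lemma wt_weaken: "wt G t s k \<Longrightarrow> env_le G G' \<Longrightarrow> wt G' t s k" using weaken by blast
lemma wmt_weaken: "wmt G t s k \<Longrightarrow> env_le G G' \<Longrightarrow> wmt G' t s k" using weaken by blast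

lemma sizes:
  "(wt G t s k \<longrightarrow> 1 \<le> k) \<and> (wmt G t M k \<longrightarrow> size M \<le> k \<and> M \<noteq> {#})"
  by (induction rule: wt_wmt.induct) auto

lemma lift_typing:
  "(wt G t s k \<longrightarrow> (\<forall>j. wt (shift_env j G) (lift j t) s k)) \<and>
   (wmt G t M k \<longrightarrow> (\<forall>j. wmt (shift_env j G) (lift j t) M k))"
proof (induction rule: wt_wmt.induct)
  case (wvar x \<sigma> \<Gamma>)
  show ?case
  proof
    fix j
    have "env_le (single_env (if x < j then x else Suc x) \<sigma>) (shift_env j \<Gamma>)"
      using wvar unfolding env_le_def single_env_def shift_env_def
      by (auto split: if_splits)
    then show "wt (shift_env j \<Gamma>) (lift j (Var x)) \<sigma> 1"
      by (auto intro: wvar')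
  qed
next
  case (wabs M \<Gamma> t \<sigma> k) then show ?case
    by (metis lift.simps(2) shift_ext wt_wmt.wabs)
next
  case (wone \<Gamma> t \<sigma> k) then show ?case by (simp add: wt_wmt.wone)
next
  case (wadd \<Gamma> t \<sigma> k \<Delta> M m \<Theta>) then show ?case
    by (metis shift_le shift_union wt_wmt.wadd)
next
  case (wapp \<Gamma> t A \<tau>0 k1 \<Delta> u \<tau>1 k2 \<Lambda> r \<sigma> k3 \<Theta>)
  show ?case
  proof
    fix j
    have "wt (env_ext (image_mset snd A) (shift_env j \<Lambda>)) (lift (Suc j) r) \<sigma> k3"
      using wapp.IH(3) by (metis shift_ext)
    moreover have "env_le (shift_env j \<Gamma> \<and>\<^sub>e shift_env j \<Delta> \<and>\<^sub>e shift_env j \<Lambda>) (shift_env j \<Theta>)"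
      by (metis shift_le shift_union wapp.hyps(4))
    ultimately show "wt (shift_env j \<Theta>) (lift j (App t u r)) \<sigma> (Suc (k1 + k2 + k3))"
      using wapp.IH(1,2) by (auto intro: wt_wmt.wapp)
  qed
qed



inductive_cases wmtE: "wmt G t M k"
inductive_cases wtLamE: "wt G (Lam t) s k"
inductive_cases wtAppE: "wt G (App t u r) s k"
inductive_cases wtVarE: "wt G (Var x) s k"

lemma wmt_nonempty: "wmt G t M k \<Longrightarrow> M \<noteq> {#}" using sizes by blast
lemma wmt_size: "wmt G t M k \<Longrightarrow> size M \<le> k" using sizes by blast
lemma wt_pos: "wt G t s k \<Longrightarrow> 1 \<le> k" using sizes by blast

lemma wmt_single_inv: "wmt G t {#s#} k \<Longrightarrow> wt G t s k"
  by (erule wmtE) (auto dest: wmt_nonempty)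

lemma wmt_union0:
  "(wt G1 t s k1 \<longrightarrow> True) \<and> (wmt G1 t A k1 \<longrightarrow> (\<forall>G2 B k2. wmt G2 t B k2 \<longrightarrow> wmt (G1 \<and>\<^sub>e G2) t (A + B) (k1 + k2)))"
proof (induction rule: wt_wmt.induct)
  case (wone \<Gamma> t \<sigma> k)
  show ?case
  proof (intro allI impI)
    fix G2 B k2 assume "wmt G2 t B k2"
    from wt_wmt.wadd[OF wone.hyps this env_le_refl]
    show "wmt (\<Gamma> \<and>\<^sub>e G2) t ({#\<sigma>#} + B) (k + k2)" by simp
  qed
next
  case (wadd \<Gamma> t \<sigma> k \<Delta> M m \<Theta>)
  show ?case
  proof (intro allI impI)
    fix G2 B k2 assume b: "wmt G2 t B k2"
    have "wmt (\<Delta> \<and>\<^sub>e G2) t (M + B) (m + k2)" using wadd b by blast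
    moreover have "env_le (\<Gamma> \<and>\<^sub>e (\<Delta> \<and>\<^sub>e G2)) (\<Theta> \<and>\<^sub>e G2)"
      using wadd.hyps(3) by (metis env_le_refl env_le_union env_union_assoc)
    ultimately have "wmt (\<Theta> \<and>\<^sub>e G2) t (add_mset \<sigma> (M + B)) (k + (m + k2))"
      using wadd.hyps(1) wt_wmt.wadd by blast
    then show "wmt (\<Theta> \<and>\<^sub>e G2) t (add_mset \<sigma> M + B) (k + m + k2)" by (simp add: add.assoc)
  qed
qed auto

lemma wmt_union: "wmt G1 t A k1 \<Longrightarrow> wmt G2 t B k2 \<Longrightarrow> wmt (G1 \<and>\<^sub>e G2) t (A + B) (k1 + k2)"
  using wmt_union0 by blast

lemma wmt_add_inv0:
  "(wt G t s0 k \<longrightarrow> True) \<and> (wmt G t N k \<longrightarrow> (\<forall>s M. N = add_mset s M \<longrightarrow> M \<noteq> {#} \<longrightarrow>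
   (\<exists>G1 G2 k1 k2. wt G1 t s k1 \<and> wmt G2 t M k2 \<and> env_le (G1 \<and>\<^sub>e G2) G \<and> k = k1 + k2)))"
proof (induction rule: wt_wmt.induct)
  case (wone \<Gamma> t \<sigma> k)
  then show ?case by auto
next
  case (wadd \<Gamma> t \<sigma> k \<Delta> M' m \<Theta>)
  show ?case
  proof (intro allI impI)
  fix s M assume pr: "add_mset \<sigma> M' = add_mset s M" "M \<noteq> {#}"
  show "\<exists>G1 G2 k1 k2. wt G1 t s k1 \<and> wmt G2 t M k2 \<and> env_le (G1 \<and>\<^sub>e G2) \<Theta> \<and> k + m = k1 + k2"
  proof (cases "\<sigma> = s \<and> M' = M")
    case True
    then show ?thesis using wadd.hyps by (intro exI[of _ \<Gamma>] exI[of _ \<Delta>] exI[of _ k] exI[of _ m]) simp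
  next
    case False
    then obtain K where K: "M = add_mset \<sigma> K" "M' = add_mset s K"
      using pr(1) by (auto simp: add_eq_conv_ex)
    show ?thesis
    proof (cases "K = {#}")
      case True
      then have "wt \<Delta> t s m" using K wadd.hyps(2) wmt_single_inv by auto
      moreover have "wmt \<Gamma> t M k" using K True wadd.hyps(1) wt_wmt.wone by auto
      moreover have "env_le (\<Delta> \<and>\<^sub>e \<Gamma>) \<Theta>" using wadd.hyps(3) by (simp add: env_union_comm)
      ultimately show ?thesis by (intro exI[of _ \<Delta>] exI[of _ \<Gamma>] exI[of _ m] exI[of _ k]) simp
    next
      case False
      obtain G1 G2 k1 k2 where g: "wt G1 t s k1" "wmt G2 t K k2" "env_le (G1 \<and>\<^sub>e G2) \<Delta>" "m = k1 + k2"
        using wadd.IH K(2) False by blast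
      have "wmt (\<Gamma> \<and>\<^sub>e G2) t M (k + k2)"
        using K(1) g(2) wadd.hyps(1) wt_wmt.wadd[OF _ _ env_le_refl] by blast
      moreover have "env_le (G1 \<and>\<^sub>e (\<Gamma> \<and>\<^sub>e G2)) \<Theta>"
      proof -
        have "env_le (\<Gamma> \<and>\<^sub>e (G1 \<and>\<^sub>e G2)) (\<Gamma> \<and>\<^sub>e \<Delta>)" using g(3) env_le_union env_le_refl by blast
        then show ?thesis using wadd.hyps(3) env_le_trans env_union_lcomm by metis
      qed
      ultimately show ?thesis using g(1,4) by (metis add.left_commute)
    qed
  qed
  qed
qed auto

lemma wmt_add_inv:
  "wmt G t (add_mset s M) k \<Longrightarrow> M \<noteq> {#} \<Longrightarrow>
   \<exists>G1 G2 k1 k2. wt G1 t s k1 \<and> wmt G2 t M k2 \<and> env_le (G1 \<and>\<^sub>e G2) G \<and> k = k1 + k2"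
  using wmt_add_inv0 by blast

lemma wmt_split:
  "wmt G t (A + B) k \<Longrightarrow> A \<noteq> {#} \<Longrightarrow> B \<noteq> {#} \<Longrightarrow>
   \<exists>G1 G2 k1 k2. wmt G1 t A k1 \<and> wmt G2 t B k2 \<and> env_le (G1 \<and>\<^sub>e G2) G \<and> k = k1 + k2"
proof (induction A arbitrary: G k)
  case empty then show ?case by simp
next
  case (add a A)
  show ?case
  proof (cases "A = {#}")
    case True
    have h: "wmt G t (add_mset a B) k" using add.prems True by simp
    obtain G1 G2 k1 k2 where g: "wt G1 t a k1" "wmt G2 t B k2" "env_le (G1 \<and>\<^sub>e G2) G" "k = k1 + k2"
      using wmt_add_inv[OF h add.prems(3)] by blast
    have "wmt G1 t (add_mset a A) k1" using True g(1) wt_wmt.wone by simp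
    then show ?thesis using g(2,3,4) by blast
  next
    case False
    have h: "wmt G t (add_mset a (A + B)) k" using add.prems by simp
    have ne: "A + B \<noteq> {#}" using False by simp
    obtain G1 G2 k1 k2 where g: "wt G1 t a k1" "wmt G2 t (A + B) k2" "env_le (G1 \<and>\<^sub>e G2) G" "k = k1 + k2"
      using wmt_add_inv[OF h ne] by blast
    obtain H1 H2 m1 m2 where h: "wmt H1 t A m1" "wmt H2 t B m2" "env_le (H1 \<and>\<^sub>e H2) G2" "k2 = m1 + m2"
      using add.IH[OF g(2) False add.prems(3)] by blast
    have w: "wmt (G1 \<and>\<^sub>e H1) t (add_mset a A) (k1 + m1)"
      using wt_wmt.wadd[OF g(1) h(1) env_le_refl] by simp
    have "env_le (G1 \<and>\<^sub>e (H1 \<and>\<^sub>e H2)) (G1 \<and>\<^sub>e G2)" using h(3) env_le_union env_le_refl by blast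
    then have e: "env_le ((G1 \<and>\<^sub>e H1) \<and>\<^sub>e H2) G" using g(3) env_le_trans env_union_assoc by metis
    have "k = (k1 + m1) + m2" using g(4) h(4) by simp
    then show ?thesis using w h(2) e by blast
  qed
qed

definition msub :: "env \<Rightarrow> trm \<Rightarrow> ty multiset \<Rightarrow> nat \<Rightarrow> bool" where
  "msub D u M m = ((M = {#} \<and> m = 0) \<or> wmt D u M m)"

lemma msub_size: "msub D u M m \<Longrightarrow> size M \<le> m"
  unfolding msub_def using wmt_size by auto

lemma msub_split:
  "msub D u (A + B) m \<Longrightarrow>
   \<exists>D1 D2 m1 m2. msub D1 u A m1 \<and> msub D2 u B m2 \<and> env_le (D1 \<and>\<^sub>e D2) D \<and> m = m1 + m2"
proof -
  assume a: "msub D u (A + B) m"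
  show ?thesis
  proof (cases "A = {#}")
    case True
    have "msub empty_env u A 0" "msub D u B m" using a True unfolding msub_def by auto
    moreover have "env_le (empty_env \<and>\<^sub>e D) D" by simp
    ultimately show ?thesis by fastforce
  next
    case nA: False
    show ?thesis
    proof (cases "B = {#}")
      case True
      have "msub empty_env u B 0" "msub D u A m" using a True unfolding msub_def by auto
      moreover have "env_le (D \<and>\<^sub>e empty_env) D" by simp
      ultimately show ?thesis by fastforce
    next
      case False
      have "wmt D u (A + B) m" using a nA unfolding msub_def by auto
      from wmt_split[OF this nA False] show ?thesis unfolding msub_def by blast
    qed
  qed
qed

lemma msub_lift: "msub D u M m \<Longrightarrow> msub (shift_env j D) (lift j u) M m"
  unfolding msub_def using lift_typing by blast

lemma msub_weaken: "msub D u M m \<Longrightarrow> env_le D D' \<Longrightarrow> msub D' u M m"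
  unfolding msub_def using wmt_weaken by blast



lemma env_union_swap: "(a \<and>\<^sub>e b) \<and>\<^sub>e (c \<and>\<^sub>e d) = (a \<and>\<^sub>e c) \<and>\<^sub>e (b \<and>\<^sub>e d)"
  unfolding env_union_def by (auto simp: fun_eq_iff ac_simps)

lemma env_union_swap3: "(a \<and>\<^sub>e b) \<and>\<^sub>e (c \<and>\<^sub>e d) \<and>\<^sub>e (e \<and>\<^sub>e f) = (a \<and>\<^sub>e c \<and>\<^sub>e e) \<and>\<^sub>e (b \<and>\<^sub>e d \<and>\<^sub>e f)"
  unfolding env_union_def by (auto simp: fun_eq_iff ac_simps)

lemma msub_sub:
  assumes "msub D u M m" "X \<subseteq># M"
  shows "\<exists>D' m'. msub D' u X m' \<and> env_le D' D \<and> m' + size M \<le> m + size X"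
proof -
  obtain E where E: "M = X + E" using assms(2) by (metis subset_mset.le_iff_add)
  obtain D1 D2 m1 m2 where s: "msub D1 u X m1" "msub D2 u E m2" "env_le (D1 \<and>\<^sub>e D2) D" "m = m1 + m2"
    using msub_split[of D u X E m] assms(1) E by blast
  have "size E \<le> m2" using s(2) msub_size by blast
  moreover have "env_le D1 D" using s(3) env_le_trans env_le_unionI1 by blast
  ultimately show ?thesis using s(1,4) E by (intro exI[of _ D1] exI[of _ m1]) simp
qed

lemma env_le_single_at: "env_le (single_env x s) G \<longleftrightarrow> s \<in># G x"
  unfolding env_le_def single_env_def by auto

lemma subst_typing:
 "(wt G t s n \<longrightarrow> (\<forall>j D u m. msub D u (G j) m \<longrightarrow>
     (\<exists>n'. wt (drop_env j G \<and>\<^sub>e D) (subst t j u) s n' \<and> n' + size (G j) \<le> n + m))) \<and>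
  (wmt G t N n \<longrightarrow> (\<forall>j D u m. msub D u (G j) m \<longrightarrow>
     (\<exists>n'. wmt (drop_env j G \<and>\<^sub>e D) (subst t j u) N n' \<and> n' + size (G j) \<le> n + m)))"
proof (induction rule: wt_wmt.induct)
  case (wvar x \<sigma> \<Gamma>)
  show ?case
  proof (intro allI impI)
    fix j D u m assume ms: "msub D u (\<Gamma> j) m"
    have sx: "\<sigma> \<in># \<Gamma> x" using wvar env_le_single_at by blast
    have sz: "size (\<Gamma> j) \<le> m" using ms msub_size by blast
    consider "x < j" | "x = j" | "x > j" by linarith
    then show "\<exists>n'. wt (drop_env j \<Gamma> \<and>\<^sub>e D) (subst (Var x) j u) \<sigma> n' \<and> n' + size (\<Gamma> j) \<le> 1 + m"
    proof cases
      case 1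
      have "env_le (single_env x \<sigma>) (drop_env j \<Gamma> \<and>\<^sub>e D)"
        using sx 1 unfolding env_le_single_at by (simp add: drop_env_def)
      then show ?thesis using 1 sz by (auto intro: wvar')
    next
      case 3
      have "env_le (single_env (x - 1) \<sigma>) (drop_env j \<Gamma> \<and>\<^sub>e D)"
        using sx 3 unfolding env_le_single_at drop_env_def by (cases x) auto
      then show ?thesis using 3 sz by (auto intro: wvar')
    next
      case 2
      obtain R where R: "\<Gamma> j = add_mset \<sigma> R" using sx 2 by (metis multi_member_split)
      have w: "wmt D u (add_mset \<sigma> R) m" using ms R unfolding msub_def by auto
      show ?thesis
      proof (cases "R = {#}")
        case True
        have "wt D u \<sigma> m" using w True wmt_single_inv by simp
        then have "wt (drop_env j \<Gamma> \<and>\<^sub>e D) u \<sigma> m" using wt_weaken env_le_unionI2 by blast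
        then show ?thesis using 2 R True by auto
      next
        case False
        obtain G1 G2 k1 k2 where g: "wt G1 u \<sigma> k1" "wmt G2 u R k2" "env_le (G1 \<and>\<^sub>e G2) D" "m = k1 + k2"
          using wmt_add_inv[OF w False] by blast
        have "env_le G1 (drop_env j \<Gamma> \<and>\<^sub>e D)"
          using g(3) env_le_trans env_le_unionI1 env_le_unionI2 by blast
        then have "wt (drop_env j \<Gamma> \<and>\<^sub>e D) u \<sigma> k1" using g(1) wt_weaken by blast
        moreover have "size R \<le> k2" using g(2) wmt_size by blast
        ultimately show ?thesis using 2 R g(4) by (intro exI[of _ k1]) simp
      qed
    qed
  qed
next
  case (wabs M \<Gamma> t \<sigma> k)
  show ?case
  proof (intro allI impI)
    fix j D u m assume ms: "msub D u (\<Gamma> j) m"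
    have "msub (shift_env 0 D) (lift 0 u) (env_ext M \<Gamma> (Suc j)) m" using msub_lift[OF ms] by simp
    then obtain n' where n': "wt (drop_env (Suc j) (env_ext M \<Gamma>) \<and>\<^sub>e shift_env 0 D) (subst t (Suc j) (lift 0 u)) \<sigma> n'"
      "n' + size (\<Gamma> j) \<le> k + m"
      using wabs.IH by fastforce
    have "wt (env_ext M (drop_env j \<Gamma> \<and>\<^sub>e D)) (subst t (Suc j) (lift 0 u)) \<sigma> n'"
      using n'(1) by (simp add: drop_ext ext_union_shift0)
    then have "wt (drop_env j \<Gamma> \<and>\<^sub>e D) (subst (Lam t) j u) (Arr M \<sigma>) (Suc n')"
      by (simp add: wt_wmt.wabs)
    then show "\<exists>n'. wt (drop_env j \<Gamma> \<and>\<^sub>e D) (subst (Lam t) j u) (Arr M \<sigma>) n' \<and> n' + size (\<Gamma> j) \<le> Suc k + m"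
      using n'(2) by (intro exI[of _ "Suc n'"]) simp
  qed
next
  case (wone \<Gamma> t \<sigma> k)
  then show ?case by (meson wt_wmt.wone)
next
  case (wadd \<Gamma> t \<sigma> k \<Delta> M m \<Theta>)
  show ?case
  proof (intro allI impI)
    fix j D u mm assume ms: "msub D u (\<Theta> j) mm"
    have sub: "\<Gamma> j + \<Delta> j \<subseteq># \<Theta> j" using wadd.hyps(3) unfolding env_le_def by simp
    obtain D' m' where d: "msub D' u (\<Gamma> j + \<Delta> j) m'" "env_le D' D" "m' + size (\<Theta> j) \<le> mm + size (\<Gamma> j + \<Delta> j)"
      using msub_sub[OF ms sub] by blast
    obtain D1 D2 m1 m2 where s: "msub D1 u (\<Gamma> j) m1" "msub D2 u (\<Delta> j) m2" "env_le (D1 \<and>\<^sub>e D2) D'" "m' = m1 + m2"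
      using msub_split[OF d(1)] by blast
    obtain n1 where n1: "wt (drop_env j \<Gamma> \<and>\<^sub>e D1) (subst t j u) \<sigma> n1" "n1 + size (\<Gamma> j) \<le> k + m1"
      using wadd.IH(1) s(1) by blast
    obtain n2 where n2: "wmt (drop_env j \<Delta> \<and>\<^sub>e D2) (subst t j u) M n2" "n2 + size (\<Delta> j) \<le> m + m2"
      using wadd.IH(2) s(2) by blast
    have "env_le ((drop_env j \<Gamma> \<and>\<^sub>e D1) \<and>\<^sub>e (drop_env j \<Delta> \<and>\<^sub>e D2)) (drop_env j \<Theta> \<and>\<^sub>e D)"
    proof -
      have "(drop_env j \<Gamma> \<and>\<^sub>e D1) \<and>\<^sub>e (drop_env j \<Delta> \<and>\<^sub>e D2) = drop_env j (\<Gamma> \<and>\<^sub>e \<Delta>) \<and>\<^sub>e (D1 \<and>\<^sub>e D2)"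
        by (simp add: env_union_swap drop_union)
      moreover have "env_le (drop_env j (\<Gamma> \<and>\<^sub>e \<Delta>) \<and>\<^sub>e (D1 \<and>\<^sub>e D2)) (drop_env j \<Theta> \<and>\<^sub>e D)"
        using env_le_union[OF drop_le[OF wadd.hyps(3)] env_le_trans[OF s(3) d(2)]] .
      ultimately show ?thesis by simp
    qed
    then have "wmt (drop_env j \<Theta> \<and>\<^sub>e D) (subst t j u) (add_mset \<sigma> M) (n1 + n2)"
      using wt_wmt.wadd[OF n1(1) n2(1)] by blast
    moreover have "n1 + n2 + size (\<Theta> j) \<le> k + m + mm" using n1(2) n2(2) d(3) s(4) by simp
    ultimately show "\<exists>n'. wmt (drop_env j \<Theta> \<and>\<^sub>e D) (subst t j u) (add_mset \<sigma> M) n' \<and> n' + size (\<Theta> j) \<le> k + m + mm"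
      by blast
  qed
next
  case (wapp \<Gamma> t A \<tau>0 k1 \<Delta> v \<tau>1 k2 \<Lambda> r \<sigma> k3 \<Theta>)
  show ?case
  proof (intro allI impI)
    fix j D u mm assume ms: "msub D u (\<Theta> j) mm"
    have sub: "\<Gamma> j + \<Delta> j + \<Lambda> j \<subseteq># \<Theta> j" using wapp.hyps(4) unfolding env_le_def by simp
    obtain D' m' where d: "msub D' u (\<Gamma> j + \<Delta> j + \<Lambda> j) m'" "env_le D' D" "m' + size (\<Theta> j) \<le> mm + size (\<Gamma> j + \<Delta> j + \<Lambda> j)"
      using msub_sub[OF ms sub] by blast
    obtain D12 D3 m12 m3 where s: "msub D12 u (\<Gamma> j + \<Delta> j) m12" "msub D3 u (\<Lambda> j) m3" "env_le (D12 \<and>\<^sub>e D3) D'" "m' = m12 + m3"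
      using msub_split[OF d(1)] by blast
    obtain D1 D2 m1 m2 where s2: "msub D1 u (\<Gamma> j) m1" "msub D2 u (\<Delta> j) m2" "env_le (D1 \<and>\<^sub>e D2) D12" "m12 = m1 + m2"
      using msub_split[OF s(1)] by blast
    obtain n1 where n1: "wmt (drop_env j \<Gamma> \<and>\<^sub>e D1) (subst t j u) (ch (image_mset (\<lambda>(M, \<tau>). Arr M \<tau>) A) \<tau>0) n1" "n1 + size (\<Gamma> j) \<le> k1 + m1"
      using wapp.IH(1) s2(1) by blast
    obtain n2 where n2: "wmt (drop_env j \<Delta> \<and>\<^sub>e D2) (subst v j u) (ch (sum_mset (image_mset fst A)) \<tau>1) n2" "n2 + size (\<Delta> j) \<le> k2 + m2"
      using wapp.IH(2) s2(2) by blast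
    have "msub (shift_env 0 D3) (lift 0 u) (env_ext (image_mset snd A) \<Lambda> (Suc j)) m3" using msub_lift[OF s(2)] by simp
    then obtain n3 where n3': "wt (drop_env (Suc j) (env_ext (image_mset snd A) \<Lambda>) \<and>\<^sub>e shift_env 0 D3) (subst r (Suc j) (lift 0 u)) \<sigma> n3"
      "n3 + size (\<Lambda> j) \<le> k3 + m3"
      using wapp.IH(3) by fastforce
    have n3: "wt (env_ext (image_mset snd A) (drop_env j \<Lambda> \<and>\<^sub>e D3)) (subst r (Suc j) (lift 0 u)) \<sigma> n3"
      using n3'(1) by (simp add: drop_ext ext_union_shift0)
    have "env_le ((drop_env j \<Gamma> \<and>\<^sub>e D1) \<and>\<^sub>e (drop_env j \<Delta> \<and>\<^sub>e D2) \<and>\<^sub>e (drop_env j \<Lambda> \<and>\<^sub>e D3)) (drop_env j \<Theta> \<and>\<^sub>e D)"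
    proof -
      have "(drop_env j \<Gamma> \<and>\<^sub>e D1) \<and>\<^sub>e (drop_env j \<Delta> \<and>\<^sub>e D2) \<and>\<^sub>e (drop_env j \<Lambda> \<and>\<^sub>e D3) = drop_env j (\<Gamma> \<and>\<^sub>e \<Delta> \<and>\<^sub>e \<Lambda>) \<and>\<^sub>e ((D1 \<and>\<^sub>e D2) \<and>\<^sub>e D3)"
        by (simp add: env_union_swap3 drop_union)
      moreover have "env_le ((D1 \<and>\<^sub>e D2) \<and>\<^sub>e D3) D"
        using env_le_trans[OF env_le_union[OF s2(3) env_le_refl] env_le_trans[OF s(3) d(2)]] .
      moreover have "env_le (drop_env j (\<Gamma> \<and>\<^sub>e \<Delta> \<and>\<^sub>e \<Lambda>) \<and>\<^sub>e ((D1 \<and>\<^sub>e D2) \<and>\<^sub>e D3)) (drop_env j \<Theta> \<and>\<^sub>e D)"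
        using env_le_union[OF drop_le[OF wapp.hyps(4)] calculation(2)] .
      ultimately show ?thesis by simp
    qed
    then have "wt (drop_env j \<Theta> \<and>\<^sub>e D) (subst (App t v r) j u) \<sigma> (Suc (n1 + n2 + n3))"
      using wt_wmt.wapp[OF n1(1) n2(1) n3] by simp
    moreover have "Suc (n1 + n2 + n3) + size (\<Theta> j) \<le> Suc (k1 + k2 + k3) + mm"
      using n1(2) n2(2) n3'(2) d(3) s(4) s2(4) by simp
    ultimately show "\<exists>n'. wt (drop_env j \<Theta> \<and>\<^sub>e D) (subst (App t v r) j u) \<sigma> n' \<and> n' + size (\<Theta> j) \<le> Suc (k1 + k2 + k3) + mm"
      by blast
  qed
qed

lemma subst_wt: "wt G t s n \<Longrightarrow> msub D u (G j) m \<Longrightarrow>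
     \<exists>n'. wt (drop_env j G \<and>\<^sub>e D) (subst t j u) s n' \<and> n' + size (G j) \<le> n + m"
  using subst_typing by blast



declare union_at[simp del]

lemma plug_wt:
  "wt G (plug D (Lam t)) (Arr M \<tau>) k \<Longrightarrow> msub Dl u M m \<Longrightarrow>
   \<exists>k'. wt (G \<and>\<^sub>e Dl) (plug D (subst t 0 ((lift 0 ^^ depth D) u))) \<tau> k' \<and> k' + 1 + size M \<le> k + m"
proof (induction D arbitrary: G k Dl u)
  case Hole
  obtain k0 where h: "wt (env_ext M G) t \<tau> k0" "k = Suc k0"
    using Hole.prems(1) by (auto elim: wtLamE)
  have "msub Dl u (env_ext M G 0) m" using Hole.prems(2) by simp
  from subst_wt[OF h(1) this] obtain n' where
    "wt (drop_env 0 (env_ext M G) \<and>\<^sub>e Dl) (subst t 0 u) \<tau> n'" "n' + size (env_ext M G 0) \<le> k0 + m"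
    by blast
  then show ?case using h(2) by (intro exI[of _ n']) simp
next
  case (CApp s v D')
  from CApp.prems(1) obtain \<Gamma> \<Delta> \<Lambda> A \<tau>0 \<tau>1 k1 k2 k3 where a:
    "wmt \<Gamma> s (ch (image_mset (\<lambda>(M, \<tau>). Arr M \<tau>) A) \<tau>0) k1"
    "wmt \<Delta> v (ch (sum_mset (image_mset fst A)) \<tau>1) k2"
    "wt (env_ext (image_mset snd A) \<Lambda>) (plug D' (Lam t)) (Arr M \<tau>) k3"
    "env_le (\<Gamma> \<and>\<^sub>e \<Delta> \<and>\<^sub>e \<Lambda>) G" "k = Suc (k1 + k2 + k3)"
    by (auto elim!: wtAppE)
  obtain k' where k': "wt (env_ext (image_mset snd A) \<Lambda> \<and>\<^sub>e shift_env 0 Dl)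
       (plug D' (subst t 0 ((lift 0 ^^ depth D') (lift 0 u)))) \<tau> k'" "k' + 1 + size M \<le> k3 + m"
    using CApp.IH[OF a(3) msub_lift[OF CApp.prems(2)]] by blast
  have w: "wt (env_ext (image_mset snd A) (\<Lambda> \<and>\<^sub>e Dl))
       (plug D' (subst t 0 ((lift 0 ^^ depth D') (lift 0 u)))) \<tau> k'"
    using k'(1) by (simp add: ext_union_shift0)
  have e: "env_le (\<Gamma> \<and>\<^sub>e \<Delta> \<and>\<^sub>e (\<Lambda> \<and>\<^sub>e Dl)) (G \<and>\<^sub>e Dl)"
    using env_le_union[OF a(4) env_le_refl[of Dl]] by (simp add: env_union_assoc)
  have "wt (G \<and>\<^sub>e Dl) (App s v (plug D' (subst t 0 ((lift 0 ^^ depth D') (lift 0 u))))) \<tau> (Suc (k1 + k2 + k'))"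
    using wt_wmt.wapp[OF a(1) a(2) w e] .
  moreover have "(lift 0 ^^ depth (CApp s v D')) u = (lift 0 ^^ depth D') (lift 0 u)"
    by (simp add: funpow_swap1)
  ultimately show ?case using k'(2) a(5) by (intro exI[of _ "Suc (k1 + k2 + k')"]) simp
qed

lemma plug_wmt:
  "A \<noteq> {#} \<Longrightarrow> wmt G (plug D (Lam t)) (image_mset (\<lambda>(M, \<tau>). Arr M \<tau>) A) k \<Longrightarrow>
   msub Dl u (sum_mset (image_mset fst A)) m \<Longrightarrow>
   \<exists>k'. wmt (G \<and>\<^sub>e Dl) (plug D (subst t 0 ((lift 0 ^^ depth D) u))) (image_mset snd A) k' \<and>
        k' + size A + size (sum_mset (image_mset fst A)) \<le> k + m"
proof (induction A arbitrary: G k Dl m)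
  case empty then show ?case by simp
next
  case (add a A)
  obtain M \<tau> where a: "a = (M, \<tau>)" by (cases a)
  show ?case
  proof (cases "A = {#}")
    case True
    have "wt G (plug D (Lam t)) (Arr M \<tau>) k" using add.prems(2) True a wmt_single_inv by simp
    moreover have "msub Dl u M m" using add.prems(3) True a by simp
    ultimately obtain k' where k': "wt (G \<and>\<^sub>e Dl) (plug D (subst t 0 ((lift 0 ^^ depth D) u))) \<tau> k'"
      "k' + 1 + size M \<le> k + m" using plug_wt by blast
    then show ?thesis using True a by (intro exI[of _ k']) (auto intro: wt_wmt.wone)
  next
    case False
    have w: "wmt G (plug D (Lam t)) (add_mset (Arr M \<tau>) (image_mset (\<lambda>(M, \<tau>). Arr M \<tau>) A)) k"
      using add.prems(2) a by simp
    have ne: "image_mset (\<lambda>(M, \<tau>). Arr M \<tau>) A \<noteq> {#}" using False by simp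
    obtain G1 G2 k1 k2 where g: "wt G1 (plug D (Lam t)) (Arr M \<tau>) k1"
      "wmt G2 (plug D (Lam t)) (image_mset (\<lambda>(M, \<tau>). Arr M \<tau>) A) k2" "env_le (G1 \<and>\<^sub>e G2) G" "k = k1 + k2"
      using wmt_add_inv[OF w ne] by blast
    have "msub Dl u (M + sum_mset (image_mset fst A)) m" using add.prems(3) a by simp
    from msub_split[OF this] obtain D1 D2 m1 m2 where s: "msub D1 u M m1"
      "msub D2 u (sum_mset (image_mset fst A)) m2" "env_le (D1 \<and>\<^sub>e D2) Dl" "m = m1 + m2" by blast
    obtain n1 where n1: "wt (G1 \<and>\<^sub>e D1) (plug D (subst t 0 ((lift 0 ^^ depth D) u))) \<tau> n1"
      "n1 + 1 + size M \<le> k1 + m1" using plug_wt[OF g(1) s(1)] by blast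
    obtain n2 where n2: "wmt (G2 \<and>\<^sub>e D2) (plug D (subst t 0 ((lift 0 ^^ depth D) u))) (image_mset snd A) n2"
      "n2 + size A + size (sum_mset (image_mset fst A)) \<le> k2 + m2" using add.IH[OF False g(2) s(2)] by blast
    have e: "env_le ((G1 \<and>\<^sub>e D1) \<and>\<^sub>e (G2 \<and>\<^sub>e D2)) (G \<and>\<^sub>e Dl)"
      using env_le_union[OF g(3) s(3)] by (simp add: env_union_swap)
    have "wmt (G \<and>\<^sub>e Dl) (plug D (subst t 0 ((lift 0 ^^ depth D) u))) (add_mset \<tau> (image_mset snd A)) (n1 + n2)"
      using wt_wmt.wadd[OF n1(1) n2(1) e] .
    then show ?thesis using n1(2) n2(2) g(4) s(4) a by (intro exI[of _ "n1 + n2"]) simp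
  qed
qed

lemma sr_m0:
  "(wt G t s k \<longrightarrow> True) \<and>
   (wmt G t M k \<longrightarrow> (\<forall>t'. (\<forall>G s k. wt G t s k \<longrightarrow> (\<exists>k'<k. wt G t' s k')) \<longrightarrow> (\<exists>k'<k. wmt G t' M k')))"
proof (induction rule: wt_wmt.induct)
  case (wone \<Gamma> t \<sigma> k)
  then show ?case by (meson wt_wmt.wone)
next
  case (wadd \<Gamma> t \<sigma> k \<Delta> M m \<Theta>)
  show ?case
  proof (intro allI impI)
    fix t' assume h: "\<forall>G s k. wt G t s k \<longrightarrow> (\<exists>k'<k. wt G t' s k')"
    obtain k' where k': "k' < k" "wt \<Gamma> t' \<sigma> k'" using h wadd.hyps(1) by blast
    obtain m' where m': "m' < m" "wmt \<Delta> t' M m'" using h wadd.IH(2) by blast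
    show "\<exists>k'a<k + m. wmt \<Theta> t' (add_mset \<sigma> M) k'a"
      using wt_wmt.wadd[OF k'(2) m'(2) wadd.hyps(3)] k'(1) m'(1) by (intro exI[of _ "k' + m'"]) simp
  qed
qed auto

lemma sr_m: "(\<And>G s k. wt G t s k \<Longrightarrow> (\<exists>k'<k. wt G t' s k')) \<Longrightarrow> wmt G t M k \<Longrightarrow> \<exists>k'<k. wmt G t' M k'"
  using sr_m0 by blast

lemma sr_root:
  assumes "wt G (App (plug D (Lam t)) u r) s k"
  shows "\<exists>k'<k. wt G (subst r 0 (plug D (subst t 0 ((lift 0 ^^ depth D) u)))) s k'"
proof -
  from assms obtain \<Gamma> \<Delta> \<Lambda> A \<tau>0 \<tau>1 k1 k2 k3 where a:
    "wmt \<Gamma> (plug D (Lam t)) (ch (image_mset (\<lambda>(M, \<tau>). Arr M \<tau>) A) \<tau>0) k1"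
    "wmt \<Delta> u (ch (sum_mset (image_mset fst A)) \<tau>1) k2"
    "wt (env_ext (image_mset snd A) \<Lambda>) r s k3"
    "env_le (\<Gamma> \<and>\<^sub>e \<Delta> \<and>\<^sub>e \<Lambda>) G" "k = Suc (k1 + k2 + k3)"
    by (auto elim!: wtAppE)
  let ?Y = "plug D (subst t 0 ((lift 0 ^^ depth D) u))"
  have lG: "env_le \<Lambda> G" using a(4) env_le_trans env_le_unionI2 by blast
  show ?thesis
  proof (cases "A = {#}")
    case True
    have "msub empty_env ?Y (env_ext (image_mset snd A) \<Lambda> 0) 0" using True by (simp add: msub_def)
    from subst_wt[OF a(3) this] obtain n' where n': "wt (\<Lambda> \<and>\<^sub>e empty_env) (subst r 0 ?Y) s n'" "n' \<le> k3 + 0"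
      by auto
    then show ?thesis using a(5) lG wt_weaken by (intro exI[of _ n']) auto
  next
    case False
    have w1: "wmt \<Gamma> (plug D (Lam t)) (image_mset (\<lambda>(M, \<tau>). Arr M \<tau>) A) k1" using a(1) False by (simp add: ch_def)
    obtain m where m: "msub \<Delta> u (sum_mset (image_mset fst A)) m" "m \<le> k2"
    proof (cases "sum_mset (image_mset fst A) = {#}")
      case True then show ?thesis using that[of 0] by (simp add: msub_def)
    next
      case False
      then have "wmt \<Delta> u (sum_mset (image_mset fst A)) k2" using a(2) unfolding ch_def if_not_P[OF False] by blast
      then show ?thesis using that[of k2] by (simp add: msub_def)
    qed
    obtain k' where k': "wmt (\<Gamma> \<and>\<^sub>e \<Delta>) ?Y (image_mset snd A) k'"
      "k' + size A + size (sum_mset (image_mset fst A)) \<le> k1 + m"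
      using plug_wmt[OF False w1 m(1)] by blast
    have "msub (\<Gamma> \<and>\<^sub>e \<Delta>) ?Y (env_ext (image_mset snd A) \<Lambda> 0) k'" using k'(1) by (simp add: msub_def)
    from subst_wt[OF a(3) this] obtain n' where n': "wt (\<Lambda> \<and>\<^sub>e (\<Gamma> \<and>\<^sub>e \<Delta>)) (subst r 0 ?Y) s n'"
      "n' + size A \<le> k3 + k'" by auto
    have "env_le (\<Lambda> \<and>\<^sub>e (\<Gamma> \<and>\<^sub>e \<Delta>)) G" using a(4) by (simp add: env_union_comm)
    then have "wt G (subst r 0 ?Y) s n'" using n'(1) wt_weaken by blast
    moreover have "size A \<ge> 1" using False by (simp add: Suc_le_eq nonempty_has_size)
    ultimately show ?thesis using n'(2) k'(2) m(2) a(5) by (intro exI[of _ n']) simp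
  qed
qed

lemma sr: "dbeta t t' \<Longrightarrow> wt G t s k \<Longrightarrow> \<exists>k'<k. wt G t' s k'"
proof (induction t t' arbitrary: G s k rule: dbeta.induct)
  case (root D t u r)
  then show ?case using sr_root by blast
next
  case (lam t t')
  from lam.prems obtain M \<sigma> k0 where h: "s = Arr M \<sigma>" "wt (env_ext M G) t \<sigma> k0" "k = Suc k0"
    by (auto elim: wtLamE)
  then obtain k' where "k' < k0" "wt (env_ext M G) t' \<sigma> k'" using lam.IH by blast
  then show ?case using h by (intro exI[of _ "Suc k'"]) (auto intro: wt_wmt.wabs)
next
  case (app1 t t' u r)
  from app1.prems obtain \<Gamma> \<Delta> \<Lambda> A \<tau>0 \<tau>1 k1 k2 k3 where a:
    "wmt \<Gamma> t (ch (image_mset (\<lambda>(M, \<tau>). Arr M \<tau>) A) \<tau>0) k1"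
    "wmt \<Delta> u (ch (sum_mset (image_mset fst A)) \<tau>1) k2"
    "wt (env_ext (image_mset snd A) \<Lambda>) r s k3"
    "env_le (\<Gamma> \<and>\<^sub>e \<Delta> \<and>\<^sub>e \<Lambda>) G" "k = Suc (k1 + k2 + k3)"
    by (auto elim!: wtAppE)
  obtain k1' where "k1' < k1" "wmt \<Gamma> t' (ch (image_mset (\<lambda>(M, \<tau>). Arr M \<tau>) A) \<tau>0) k1'"
    using sr_m[OF app1.IH a(1)] by blast
  then show ?case using wt_wmt.wapp[OF _ a(2) a(3) a(4)] a(5) by (intro exI[of _ "Suc (k1' + k2 + k3)"]) auto
next
  case (app2 u u' t r)
  from app2.prems obtain \<Gamma> \<Delta> \<Lambda> A \<tau>0 \<tau>1 k1 k2 k3 where a: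
    "wmt \<Gamma> t (ch (image_mset (\<lambda>(M, \<tau>). Arr M \<tau>) A) \<tau>0) k1"
    "wmt \<Delta> u (ch (sum_mset (image_mset fst A)) \<tau>1) k2"
    "wt (env_ext (image_mset snd A) \<Lambda>) r s k3"
    "env_le (\<Gamma> \<and>\<^sub>e \<Delta> \<and>\<^sub>e \<Lambda>) G" "k = Suc (k1 + k2 + k3)"
    by (auto elim!: wtAppE)
  obtain k2' where "k2' < k2" "wmt \<Delta> u' (ch (sum_mset (image_mset fst A)) \<tau>1) k2'"
    using sr_m[OF app2.IH a(2)] by blast
  then show ?case using wt_wmt.wapp[OF a(1) _ a(3) a(4)] a(5) by (intro exI[of _ "Suc (k1 + k2' + k3)"]) auto
next
  case (app3 r r' t u)
  from app3.prems obtain \<Gamma> \<Delta> \<Lambda> A \<tau>0 \<tau>1 k1 k2 k3 where a: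
    "wmt \<Gamma> t (ch (image_mset (\<lambda>(M, \<tau>). Arr M \<tau>) A) \<tau>0) k1"
    "wmt \<Delta> u (ch (sum_mset (image_mset fst A)) \<tau>1) k2"
    "wt (env_ext (image_mset snd A) \<Lambda>) r s k3"
    "env_le (\<Gamma> \<and>\<^sub>e \<Delta> \<and>\<^sub>e \<Lambda>) G" "k = Suc (k1 + k2 + k3)"
    by (auto elim!: wtAppE)
  obtain k3' where "k3' < k3" "wt (env_ext (image_mset snd A) \<Lambda>) r' s k3'"
    using app3.IH a(3) by blast
  then show ?case using wt_wmt.wapp[OF a(1) a(2) _ a(4)] a(5) by (intro exI[of _ "Suc (k1 + k2 + k3')"]) auto
qed

lemma bound: "(dbeta ^^ n) t t' \<Longrightarrow> wt G t s k \<Longrightarrow> n \<le> k"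
proof (induction n arbitrary: t k)
  case 0 then show ?case by simp
next
  case (Suc n)
  from relpowp_Suc_D2[OF Suc.prems(1)] obtain y where y: "dbeta t y" "(dbeta ^^ n) y t'" by blast
  obtain k' where "k' < k" "wt G y s k'" using sr[OF y(1) Suc.prems(2)] by blast
  then show ?case using Suc.IH[OF y(2)] by fastforce
qed

theorem mainTheorem9:
  assumes "typing \<Gamma> t \<sigma> k"
  shows "t \<in> SN_dbeta \<and> dnorm t \<le> enat k"
proof
  have w: "wt \<Gamma> t \<sigma> k" using assms typing_wt by blast
  show "t \<in> SN_dbeta"
    unfolding SN_dbeta_def
  proof (clarify)
    fix f assume f: "t = f 0" "\<forall>i. dbeta (f i) (f (Suc i))"
    have "\<And>n. (dbeta ^^ n) (f 0) (f n)"
    proof -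
      fix n show "(dbeta ^^ n) (f 0) (f n)"
        by (induction n) (auto intro: relpowp_Suc_I f(2)[rule_format])
    qed
    then have "Suc k \<le> k" using bound w f(1) by blast
    then show False by simp
  qed
  show "dnorm t \<le> enat k"
    unfolding dnorm_def
    by (rule Sup_least) (auto dest: bound[OF _ w])
qed

end
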